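(* None of the semantics $\mathit{na}$, $\mathit{stg}$, $\mathit{cf2}$, $\mathit{tfcf2}$, $\mathit{cf1.5}$, $\mathit{stg2}$, $\mathit{tfstg2}$, $\mathit{stg1.5}$ satisfies the reinstatement criterion.
   Context: An argumentation framework (AF) is $\mathcal{F}=(A_{\mathcal{F}},R_{\mathcal{F}})$ with $R_{\mathcal{F}}\subseteq A_{\mathcal{F}}\times A_{\mathcal{F}}$; $a\rightarrow b$ means $(a,b)\in R_{\mathcal{F}}$. $S$ defends $a$ if every attacker of $a$ is attacked by some element of $S$. A semantics $\sigma$ (assigning a set $\sigma(\mathcal{F})$ of subsets of $A_{\mathcal{F}}$ to each AF) satisfies the reinstatement criterion if for every AF $\mathcal{F}$ and every $S\in\sigma(\mathcal{F})$, whenever $S$ defends an argument $a$, then $a\in S$. $\mathcal{F}|_B=(A_{\mathcal{F}}\cap B,R_{\mathcal{F}}\cap(B\times B))$. Conflict-free: no $a,b\in S$ with $a\rightarrow b$. $\mathit{na}$: $\subseteq$-maximal conflict-free sets. $S^\oplus=S\cup\{x:\exists y\in S,\ y\rightarrow x\}$; $\mathit{stg}$: conflict-free $S$ with no conflict-free $T$ such that $S^\oplus\subsetneq T^\oplus$. $\mathrm{SCC}$: strongly connected components of the attack graph. $D_S(X)=\{b\in X:\exists a\in S\setminus X,\ a\rightarrow b\}$. $\mathit{cf2}$: $S\in\mathit{cf2}(\mathcal{F})$ iff either $|\mathrm{SCC}(\mathcal{F})|=1$ and $S$ is naive in $\mathcal{F}$, or $|\mathrm{SCC}(\mathcal{F})|\ne1$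 and for each $X\in\mathrm{SCC}(\mathcal{F})$, $S\cap X\in\mathit{cf2}(\mathcal{F}|_{X\setminus D_S(X)})$, recursively (membership requires the recursion to be well-founded). $\mathit{stg2}$: same with stage. $\mathit{tfcf2}$/$\mathit{tfstg2}$: $C^0_S(a)=\mathrm{SCC}(a)$; $C^{\alpha+1}_S(a)$ = component of $a$ in $\mathcal{F}|_{C^\alpha_S(a)\setminus D_S(C^\alpha_S(a))}$; at limits $\lambda$, component of $a$ in $\mathcal{F}|_{\bigcap_{\alpha<\lambda}C^\alpha_S(a)}$; $\alpha_S(a)$ = least $\alpha$ with $a\notin C^\alpha_S(a)$ or $C^{\alpha+1}_S(a)=C^\alpha_S(a)$; $S$ is a member iff conflict-free and for each $a$, $a\notin C^{\alpha_S(a)}_S(a)$ or $S\cap C^{\alpha_S(a)}_S(a)$ is naive (resp. stage) in $\mathcal{F}|_{C^{\alpha_S(a)}_S(a)}$. $\mathit{cf1.5}$/$\mathit{stg1.5}$: $S$ conflict-free and for each $X\in\mathrm{SCC}(\mathcal{F})$, $S\cap X$ is naive (resp. stage) in $\mathcal{F}|_{X\setminus D_S(X)}$. *)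

theory Defs
  imports Main
begin

type_synonym 'a AF = "'a set \<times> ('a \<times> 'a) set"

definition args :: "'a AF \<Rightarrow> 'a set" where "args F = fst F"
definition atts :: "'a AF \<Rightarrow> ('a \<times> 'a) set" where "atts F = snd F"

definition wf_AF :: "'a AF \<Rightarrow> bool" where
  "wf_AF F \<longleftrightarrow> atts F \<subseteq> args F \<times> args F"

definition restrict :: "'a AF \<Rightarrow> 'a set \<Rightarrow> 'a AF" where
  "restrict F B = (args F \<inter> B, atts F \<inter> (B \<times> B))"

definition defends :: "'a AF \<Rightarrow> 'a set \<Rightarrow> 'a \<Rightarrow> bool" where
  "defends F S a \<longleftrightarrow> (\<forall>b. (b, a) \<in> atts F \<longrightarrow> (\<exists>c\<in>S. (c, b) \<in> atts F))"

definition conflict_free :: "'a AF \<Rightarrow> 'a set \<Rightarrow> bool" where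
  "conflict_free F S \<longleftrightarrow> S \<subseteq> args F \<and> (\<forall>a\<in>S. \<forall>b\<in>S. (a, b) \<notin> atts F)"

definition naive :: "'a AF \<Rightarrow> 'a set \<Rightarrow> bool" where
  "naive F S \<longleftrightarrow> conflict_free F S \<and>
     (\<forall>T. conflict_free F T \<and> S \<subseteq> T \<longrightarrow> T = S)"

definition range_plus :: "'a AF \<Rightarrow> 'a set \<Rightarrow> 'a set" where
  "range_plus F S = S \<union> {x. \<exists>y\<in>S. (y, x) \<in> atts F}"

definition stage :: "'a AF \<Rightarrow> 'a set \<Rightarrow> bool" where
  "stage F S \<longleftrightarrow> conflict_free F S \<and>
     \<not> (\<exists>T. conflict_free F T \<and> range_plus F S \<subset> range_plus F T)"

definition same_scc :: "'a AF \<Rightarrow> 'a \<Rightarrow> 'a \<Rightarrow> bool" where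
  "same_scc F a b \<longleftrightarrow> a \<in> args F \<and> b \<in> args F \<and>
     (a, b) \<in> (atts F)\<^sup>* \<and> (b, a) \<in> (atts F)\<^sup>*"

definition scc_of :: "'a AF \<Rightarrow> 'a \<Rightarrow> 'a set" where
  "scc_of F a = {b. same_scc F a b}"

definition SCCs :: "'a AF \<Rightarrow> 'a set set" where
  "SCCs F = {scc_of F a | a. a \<in> args F}"

definition D :: "'a AF \<Rightarrow> 'a set \<Rightarrow> 'a set \<Rightarrow> 'a set" where
  "D F S X = {b \<in> X. \<exists>a \<in> S - X. (a, b) \<in> atts F}"

text \<open>SCC-recursive schema (cf2 with base naive, stg2 with base stage).
  Defined inductively: membership requires a well-founded recursion.\<close>
inductive scc_rec :: "('a AF \<Rightarrow> 'a set \<Rightarrow> bool) \<Rightarrow> 'a AF \<Rightarrow> 'a set \<Rightarrow> bool"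
  for base :: "'a AF \<Rightarrow> 'a set \<Rightarrow> bool" where
  single: "(\<exists>X. SCCs F = {X}) \<Longrightarrow> base F S \<Longrightarrow> scc_rec base F S"
| multi: "\<not> (\<exists>X. SCCs F = {X}) \<Longrightarrow> S \<subseteq> args F \<Longrightarrow>
          (\<forall>X\<in>SCCs F. scc_rec base (restrict F (X - D F S X)) (S \<inter> X)) \<Longrightarrow>
          scc_rec base F S"

definition cf2 :: "'a AF \<Rightarrow> 'a set \<Rightarrow> bool" where "cf2 = scc_rec naive"
definition stg2 :: "'a AF \<Rightarrow> 'a set \<Rightarrow> bool" where "stg2 = scc_rec stage"

definition one_half :: "('a AF \<Rightarrow> 'a set \<Rightarrow> bool) \<Rightarrow> 'a AF \<Rightarrow> 'a set \<Rightarrow> bool" where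
  "one_half base F S \<longleftrightarrow> conflict_free F S \<and>
     (\<forall>X\<in>SCCs F. base (restrict F (X - D F S X)) (S \<inter> X))"

definition cf15 :: "'a AF \<Rightarrow> 'a set \<Rightarrow> bool" where "cf15 = one_half naive"
definition stg15 :: "'a AF \<Rightarrow> 'a set \<Rightarrow> bool" where "stg15 = one_half stage"

text \<open>Transfinite variants. comp F a X is the component of a in F restricted to X
  (empty if a is not in X). The stages of a (w.r.t. S) are the values C^alpha_S(a)
  of the transfinite sequence; they are generated by: the SCC of a, the successor step,
  and the limit step (component of a in the intersection of a nonempty set of stages).\<close>
definition comp :: "'a AF \<Rightarrow> 'a \<Rightarrow> 'a set \<Rightarrow> 'a set" where
  "comp F a X = scc_of (restrict F X) a"

definition tf_step :: "'a AF \<Rightarrow> 'a set \<Rightarrow> 'a \<Rightarrow> 'a set \<Rightarrow> 'a set" where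
  "tf_step F S a X = comp F a (X - D F S X)"

inductive_set tf_stages :: "'a AF \<Rightarrow> 'a set \<Rightarrow> 'a \<Rightarrow> 'a set set"
  for F :: "'a AF" and S :: "'a set" and a :: 'a where
  zero: "scc_of F a \<in> tf_stages F S a"
| succ: "X \<in> tf_stages F S a \<Longrightarrow> tf_step F S a X \<in> tf_stages F S a"
| lim: "K \<noteq> {} \<Longrightarrow> (\<forall>X\<in>K. X \<in> tf_stages F S a) \<Longrightarrow> comp F a (\<Inter>K) \<in> tf_stages F S a"

text \<open>S is a member iff conflict-free and, for every argument a, if a survives until the
  stage C^{alpha_S(a)} where the sequence stabilises, then S restricted there is base-extension.
  (A stage X with a in X and tf_step X = X is exactly C^{alpha_S(a)} with a in it.)\<close>
definition tf :: "('a AF \<Rightarrow> 'a set \<Rightarrow> bool) \<Rightarrow> 'a AF \<Rightarrow> 'a set \<Rightarrow> bool" where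
  "tf base F S \<longleftrightarrow> conflict_free F S \<and>
     (\<forall>a\<in>args F. \<forall>X\<in>tf_stages F S a.
        a \<in> X \<and> tf_step F S a X = X \<longrightarrow> base (restrict F X) (S \<inter> X))"

definition tfcf2 :: "'a AF \<Rightarrow> 'a set \<Rightarrow> bool" where "tfcf2 = tf naive"
definition tfstg2 :: "'a AF \<Rightarrow> 'a set \<Rightarrow> bool" where "tfstg2 = tf stage"

definition reinstatement :: "('a AF \<Rightarrow> 'a set \<Rightarrow> bool) \<Rightarrow> bool" where
  "reinstatement \<sigma> \<longleftrightarrow> (\<forall>F S a. wf_AF F \<longrightarrow> \<sigma> F S \<longrightarrow> a \<in> args F \<longrightarrow>
      defends F S a \<longrightarrow> a \<in> S)"

end

theory Submission
  imports Defs
begin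

definition A0 :: "nat set" where "A0 = {0,1,2}"
definition R0 :: "(nat \<times> nat) set" where "R0 = {(0,1),(1,2),(2,0)}"
definition F0 :: "nat AF" where "F0 = (A0, R0)"

lemma args0[simp]: "args F0 = A0" and atts0[simp]: "atts F0 = R0"
  by (simp_all add: F0_def args_def atts_def)

lemma wf0: "wf_AF F0" by (auto simp: wf_AF_def A0_def R0_def)

lemma reach0: "x \<in> A0 \<Longrightarrow> y \<in> A0 \<Longrightarrow> (x,y) \<in> R0\<^sup>*"
proof -
  have a: "(0,1) \<in> R0\<^sup>*" "(1,2) \<in> R0\<^sup>*" "(2,0) \<in> R0\<^sup>*"
    by (rule r_into_rtrancl, simp add: R0_def)+
  have b1: "(0,2) \<in> R0\<^sup>*" by (rule rtrancl_trans[OF a(1) a(2)])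
  have b2: "(1,0) \<in> R0\<^sup>*" by (rule rtrancl_trans[OF a(2) a(3)])
  have b3: "(2,1) \<in> R0\<^sup>*" by (rule rtrancl_trans[OF a(3) a(1)])
  have rf: "(z,z) \<in> R0\<^sup>*" for z by (rule rtrancl.rtrancl_refl)
  assume "x \<in> A0" "y \<in> A0"
  hence "x = 0 \<or> x = 1 \<or> x = 2" "y = 0 \<or> y = 1 \<or> y = 2" unfolding A0_def by simp_all
  thus ?thesis using a b1 b2 b3 rf by (elim disjE) simp_all
qed

lemma scc0: "a \<in> A0 \<Longrightarrow> scc_of F0 a = A0"
proof (rule set_eqI)
  fix b assume a: "a \<in> A0"
  show "b \<in> scc_of F0 a \<longleftrightarrow> b \<in> A0"
    using reach0[of a b] reach0[of b a] a unfolding scc_of_def same_scc_def args0 atts0 mem_Collect_eq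
    by blast
qed

lemma SCCs0: "SCCs F0 = {A0}"
proof (rule set_eqI)
  fix Y
  have "(\<exists>a. Y = scc_of F0 a \<and> a \<in> args F0) \<longleftrightarrow> Y = A0"
  proof
    assume "\<exists>a. Y = scc_of F0 a \<and> a \<in> args F0"
    then obtain a where "Y = scc_of F0 a" "a \<in> A0" by auto
    thus "Y = A0" using scc0 by simp
  next
    assume y: "Y = A0"
    have "(0::nat) \<in> A0" unfolding A0_def by simp
    thus "\<exists>a. Y = scc_of F0 a \<and> a \<in> args F0" using scc0[of 0] y by auto
  qed
  thus "Y \<in> SCCs F0 \<longleftrightarrow> Y \<in> {A0}" unfolding SCCs_def by simp
qed

lemma D0: "D F0 {0} A0 = {}" by (auto simp: D_def A0_def)

lemma restr0: "restrict F0 A0 = F0" by (simp add: restrict_def F0_def args_def atts_def R0_def A0_def)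

lemma cf0: "conflict_free F0 {0}" by (auto simp: conflict_free_def A0_def R0_def)

lemma naive0: "naive F0 {0}"
  unfolding naive_def conflict_free_def by (auto simp: A0_def R0_def)

lemma stage0: "stage F0 {0}"
proof -
  have ne: "range_plus F0 T \<noteq> A0" if cf: "conflict_free F0 T" for T
  proof
    assume r: "range_plus F0 T = A0"
    have cfT: "\<forall>a\<in>T. \<forall>b\<in>T. (a, b) \<notin> R0" using cf unfolding conflict_free_def atts0 by blast
    have m0: "(0::nat) \<in> range_plus F0 T" "(1::nat) \<in> range_plus F0 T" "(2::nat) \<in> range_plus F0 T"
      using r by (simp_all add: A0_def)
    have rp: "x \<in> range_plus F0 T \<longleftrightarrow> x \<in> T \<or> (\<exists>y\<in>T. (y,x) \<in> R0)" for x
      unfolding range_plus_def atts0 by blast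
    have e: "(y,x) \<in> R0 \<longleftrightarrow> (y = 0 \<and> x = 1) \<or> (y = 1 \<and> x = 2) \<or> (y = 2 \<and> x = 0)" for x y :: nat
      unfolding R0_def by blast
    have "0 \<in> T \<or> 2 \<in> T" using m0(1) rp e by simp
    moreover have "1 \<in> T \<or> 0 \<in> T" using m0(2) rp e by simp
    moreover have "2 \<in> T \<or> 1 \<in> T" using m0(3) rp e by simp
    moreover have "\<not> (0 \<in> T \<and> 1 \<in> T)" "\<not> (1 \<in> T \<and> 2 \<in> T)" "\<not> (2 \<in> T \<and> 0 \<in> T)"
      using cfT e by blast+
    ultimately show False by blast
  qed
  have sub: "range_plus F0 T \<subseteq> A0" if "conflict_free F0 T" for T
    using that unfolding conflict_free_def range_plus_def atts0 args0 A0_def R0_def by auto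
  have rp: "range_plus F0 {0} = {0,1}" by (auto simp: range_plus_def R0_def)
  have "\<not> range_plus F0 {0} \<subset> range_plus F0 T" if t: "conflict_free F0 T" for T
  proof
    assume p: "range_plus F0 {0} \<subset> range_plus F0 T"
    then obtain x where x: "x \<in> range_plus F0 T" "x \<notin> {0,1}" unfolding rp by blast
    have "x \<in> A0" using x sub[OF t] by blast
    hence "x = 2" using x unfolding A0_def by blast
    hence "A0 \<subseteq> range_plus F0 T" using x p unfolding rp A0_def by blast
    thus False using sub[OF t] ne[OF t] by blast
  qed
  thus ?thesis using cf0 unfolding stage_def by blast
qed

lemma def0: "defends F0 {0} 2" by (auto simp: defends_def R0_def)

lemma stages0: "X \<in> tf_stages F0 {0} a \<Longrightarrow> a \<in> A0 \<Longrightarrow> X = A0"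
proof (induction rule: tf_stages.induct)
  case zero thus ?case using scc0 by simp
next
  case (succ X) thus ?case using D0 scc0 restr0 by (simp add: tf_step_def comp_def)
next
  case (lim K)
  hence "\<Inter>K = A0" by auto
  thus ?case using lim scc0 restr0 by (simp add: comp_def)
qed

lemma tf0: "base F0 {0} \<Longrightarrow> tf base F0 {0}"
proof -
  assume b: "base F0 {0}"
  have "base (restrict F0 X) ({0} \<inter> X)" if "a \<in> A0" "X \<in> tf_stages F0 {0} a" for a X
  proof -
    have "X = A0" using stages0 that by blast
    moreover have "{0} \<inter> A0 = {0}" by (auto simp: A0_def)
    ultimately show ?thesis using b restr0 by simp
  qed
  thus ?thesis unfolding tf_def using cf0 by auto
qed

lemma oh0: "base F0 {0} \<Longrightarrow> one_half base F0 {0}"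
  unfolding one_half_def using SCCs0 D0 restr0 cf0 by (auto simp: A0_def)

lemma rec0: "base F0 {0} \<Longrightarrow> scc_rec base F0 {0}"
  using SCCs0 by (auto intro: scc_rec.single)

lemma notre: "\<sigma> F0 {0} \<Longrightarrow> \<not> reinstatement \<sigma>"
proof -
  assume s: "\<sigma> F0 {0}"
  have "(2::nat) \<in> args F0" "(2::nat) \<notin> {0}" by (auto simp: A0_def)
  thus ?thesis unfolding reinstatement_def using wf0 def0 s by blast
qed

theorem theorem11:
  shows "\<not> reinstatement (naive :: nat AF \<Rightarrow> nat set \<Rightarrow> bool) \<and>
         \<not> reinstatement (stage :: nat AF \<Rightarrow> nat set \<Rightarrow> bool) \<and>
         \<not> reinstatement (cf2 :: nat AF \<Rightarrow> nat set \<Rightarrow> bool) \<and>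
         \<not> reinstatement (tfcf2 :: nat AF \<Rightarrow> nat set \<Rightarrow> bool) \<and>
         \<not> reinstatement (cf15 :: nat AF \<Rightarrow> nat set \<Rightarrow> bool) \<and>
         \<not> reinstatement (stg2 :: nat AF \<Rightarrow> nat set \<Rightarrow> bool) \<and>
         \<not> reinstatement (tfstg2 :: nat AF \<Rightarrow> nat set \<Rightarrow> bool) \<and>
         \<not> reinstatement (stg15 :: nat AF \<Rightarrow> nat set \<Rightarrow> bool)"
  unfolding cf2_def stg2_def tfcf2_def tfstg2_def cf15_def stg15_def
  by (intro conjI notre naive0 stage0 rec0 tf0 oh0)

end
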